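(* Let $d \ge 1$ and let $T^{(1)}$ be a one-layer Transformer as described in the context, with Lipschitz MLP $\psi:\mathbb{R}^d\to\mathbb{R}^d$ and attention scores satisfying the uniform bounded-difference condition with constant $\delta$. Fix $k \ge 0$, prefix vectors $\mathbf{v}_1,\dots,\mathbf{v}_k \in \mathbb{R}^d$ and a vector $\mathbf{v}\in\mathbb{R}^d$ (all taken from a finite vocabulary of token vectors). For $n \ge 1$ let $S_n = (\mathbf{v}_1,\dots,\mathbf{v}_k,\underbrace{\mathbf{v},\dots,\mathbf{v}}_{n \text{ times}})$, a sequence of length $n+k$, and let $S^* = (\mathbf{v})$ be the sequence of length one. Then $$\lim_{n\to\infty}\left\lVert T^{(1)}(S_n)_{n+k} - T^{(1)}(S^* )_1\right\rVert = 0.$$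
   Context: Model. Tokens are represented by vectors in $\mathbb{R}^d$ drawn from a finite vocabulary. A (decoder, causally masked) Transformer layer $T^{(\ell)}$ maps an input sequence $S=(\mathbf{v}_1,\dots,\mathbf{v}_m)$ to the output sequence $T^{(\ell)}(S)=(\mathbf{v}'_1,\dots,\mathbf{v}'_m)$ given by $$\mathbf{z}_i = \sum_{j\le i}\alpha_{i,j}\mathbf{v}_j + \mathbf{v}_i,\qquad \mathbf{v}'_i = \psi(\mathbf{z}_i)+\mathbf{z}_i,$$ where $\psi:\mathbb{R}^d\to\mathbb{R}^d$ is an MLP assumed Lipschitz continuous, and the attention coefficients are $\alpha_{i,j} = \exp(s_{i,j})/\sum_{j'\le i}\exp(s_{i,j'})$ for $j\le i$, with scores $s_{i,j}$ computed from queries and keys of tokens $i$ and $j$ (possibly with a bounded positional encoding, such as RoPE, acting only on queries and keys). Standing assumption: there is a constant $\delta$, independent of the sequence and its length, such that $|s_{i,j}-s_{i,j'}|\le\delta$ for all $i$ and all $j,j'\le i$; consequently $\alpha_{i,j}\le e^{\delta}/i$. $T^{(\ell)}(S)_i$ denotes the $i$-th element of the output sequence, and $\lVert\cdot\rVert$ is the Euclidean norm. *)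

theory Defs
  imports "HOL-Analysis.Analysis"
begin

text \<open>Sequences of tokens are lists; positions are 1-indexed, S i = S ! (i-1).
  The attention score at query position i and key position j is
  sc (token at i) (token at j) i j : it is computed from the two tokens
  (queries/keys) and may depend on the positions (positional encoding).\<close>

definition tok :: "'a list \<Rightarrow> nat \<Rightarrow> 'a" where
  "tok S i = S ! (i - 1)"

definition attn_coef ::
  "('a \<Rightarrow> 'a \<Rightarrow> nat \<Rightarrow> nat \<Rightarrow> real) \<Rightarrow> 'a list \<Rightarrow> nat \<Rightarrow> nat \<Rightarrow> real" where
  "attn_coef sc S i j =
     exp (sc (tok S i) (tok S j) i j) / (\<Sum>j'=1..i. exp (sc (tok S i) (tok S j') i j'))"

definition layer_out ::
  "(real^'d \<Rightarrow> real^'d) \<Rightarrow> (real^'d \<Rightarrow> real^'d \<Rightarrow> nat \<Rightarrow> nat \<Rightarrow> real)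
    \<Rightarrow> (real^'d) list \<Rightarrow> nat \<Rightarrow> real^'d" where
  "layer_out psi sc S i =
     (let z = (\<Sum>j=1..i. attn_coef sc S i j *\<^sub>R tok S j) + tok S i in psi z + z)"

end

theory Submission
  imports Defs
begin

lemma key_bound:
  fixes sc :: "real^'d \<Rightarrow> real^'d \<Rightarrow> nat \<Rightarrow> nat \<Rightarrow> real"
    and V :: "(real^'d) set"
    and vs :: "(real^'d) list"
    and v :: "real^'d"
  assumes sc: "\<And>x y y' i j j'. x \<in> V \<Longrightarrow> y \<in> V \<Longrightarrow> y' \<in> V \<Longrightarrow>
           1 \<le> j \<Longrightarrow> j \<le> i \<Longrightarrow> 1 \<le> j' \<Longrightarrow> j' \<le> i \<Longrightarrow>
           \<bar>sc x y i j - sc x y' i j'\<bar> \<le> \<delta>"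
    and vsV: "set vs \<subseteq> V"
    and vV: "v \<in> V"
    and n: "1 \<le> n"
  defines "S \<equiv> vs @ replicate n v"
  defines "m \<equiv> n + length vs"
  defines "g \<equiv> (\<lambda>j. if j \<le> length vs then norm (vs ! (j - 1) - v) else 0)"
  shows "norm ((\<Sum>j=1..m. attn_coef sc S m j *\<^sub>R tok S j) + tok S m - (v + v))
          \<le> exp \<delta> * (\<Sum>j=1..length vs. g j) / real m"
proof -
  let ?s = "\<lambda>j. sc (tok S m) (tok S j) m j"
  define D where "D = (\<Sum>j'=1..m. exp (?s j'))"
  have m1: "1 \<le> m" using n by (simp add: m_def)
  have tokV: "tok S j \<in> V" if "1 \<le> j" "j \<le> m" for j
  proof (cases "j \<le> length vs")
    case True
    then have "j - 1 < length vs" using that by linarith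
    then have "tok S j = vs ! (j - 1)" by (simp add: tok_def S_def nth_append)
    then show ?thesis using vsV True that by (metis diff_less less_le_trans nth_mem subsetD zero_less_one)
  next
    case False
    then have "\<not> j - 1 < length vs" by linarith
    then have "tok S j = v" using that by (simp add: tok_def S_def nth_append m_def)
    then show ?thesis using vV by simp
  qed
  have tokm: "tok S m = v"
  proof -
    have "\<not> m - 1 < length vs" using n by (simp add: m_def)
    then show ?thesis using n by (simp add: tok_def S_def nth_append m_def)
  qed
  have tokg: "norm (tok S j - v) \<le> g j" if "1 \<le> j" "j \<le> m" for j
  proof (cases "j \<le> length vs")
    case True
    then have "j - 1 < length vs" using that by linarith
    then have "tok S j = vs ! (j - 1)" by (simp add: tok_def S_def nth_append)
    then show ?thesis using True by (simp add: g_def)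
  next
    case False
    then have "\<not> j - 1 < length vs" by linarith
    then have "tok S j = v" using that by (simp add: tok_def S_def nth_append m_def)
    then show ?thesis using False by (simp add: g_def)
  qed
  have Dpos: "D > 0" unfolding D_def using m1 by (intro sum_pos) auto
  have acoef: "attn_coef sc S m j = exp (?s j) / D" for j
    by (simp add: attn_coef_def D_def)
  have abound: "attn_coef sc S m j \<le> exp \<delta> / real m" if "1 \<le> j" "j \<le> m" for j
  proof -
    have "exp (?s j) \<le> exp \<delta> * exp (?s j')" if "1 \<le> j'" "j' \<le> m" for j'
    proof -
      have "\<bar>?s j - ?s j'\<bar> \<le> \<delta>"
        using sc[OF tokV[OF m1 order_refl] tokV[OF \<open>1 \<le> j\<close> \<open>j \<le> m\<close>] tokV[OF that]]
          \<open>1 \<le> j\<close> \<open>j \<le> m\<close> that by blast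
      then have "?s j \<le> \<delta> + ?s j'" by linarith
      then have "exp (?s j) \<le> exp (\<delta> + ?s j')" by simp
      then show ?thesis by (simp add: exp_add)
    qed
    then have "(\<Sum>j'=1..m. exp (?s j)) \<le> (\<Sum>j'=1..m. exp \<delta> * exp (?s j'))"
      by (intro sum_mono) auto
    then have "real m * exp (?s j) \<le> exp \<delta> * D"
      by (simp add: D_def sum_distrib_left)
    then show ?thesis using Dpos m1 by (simp add: acoef field_simps)
  qed
  have anonneg: "attn_coef sc S m j \<ge> 0" for j
    using Dpos by (simp add: acoef)
  have asum: "(\<Sum>j=1..m. attn_coef sc S m j) = 1"
    using Dpos by (simp add: acoef D_def flip: sum_divide_distrib)
  have eq: "(\<Sum>j=1..m. attn_coef sc S m j *\<^sub>R tok S j) + tok S m - (v + v)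
      = (\<Sum>j=1..m. attn_coef sc S m j *\<^sub>R (tok S j - v))"
  proof -
    have "(\<Sum>j=1..m. attn_coef sc S m j *\<^sub>R (tok S j - v))
        = (\<Sum>j=1..m. attn_coef sc S m j *\<^sub>R tok S j) - (\<Sum>j=1..m. attn_coef sc S m j) *\<^sub>R v"
      by (simp add: scaleR_diff_right sum_subtractf scaleR_sum_left)
    then show ?thesis using asum tokm by simp
  qed
  have "norm (\<Sum>j=1..m. attn_coef sc S m j *\<^sub>R (tok S j - v))
      \<le> (\<Sum>j=1..m. norm (attn_coef sc S m j *\<^sub>R (tok S j - v)))"
    by (rule norm_sum)
  also have "\<dots> \<le> (\<Sum>j=1..m. exp \<delta> / real m * g j)"
  proof (rule sum_mono)
    fix j assume "j \<in> {1..m}"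
    then have j: "1 \<le> j" "j \<le> m" by auto
    have "norm (attn_coef sc S m j *\<^sub>R (tok S j - v)) = attn_coef sc S m j * norm (tok S j - v)"
      using anonneg by simp
    also have "\<dots> \<le> exp \<delta> / real m * g j"
      using abound[OF j] tokg[OF j] anonneg by (intro mult_mono) auto
    finally show "norm (attn_coef sc S m j *\<^sub>R (tok S j - v)) \<le> exp \<delta> / real m * g j" .
  qed
  also have "\<dots> = exp \<delta> / real m * (\<Sum>j=1..m. g j)"
    by (simp add: sum_distrib_left)
  also have "(\<Sum>j=1..m. g j) = (\<Sum>j=1..length vs. g j)"
    by (rule sum.mono_neutral_right) (auto simp: g_def m_def)
  finally show ?thesis using eq by simp
qed

theorem lemma1:
  fixes psi :: "real^'d \<Rightarrow> real^'d"
    and sc :: "real^'d \<Rightarrow> real^'d \<Rightarrow> nat \<Rightarrow> nat \<Rightarrow> real"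
    and V :: "(real^'d) set"
    and \<delta> :: real
    and vs :: "(real^'d) list"
    and v :: "real^'d"
  assumes "finite V"
    and "\<exists>L. L-lipschitz_on UNIV psi"
    and "\<And>x y y' i j j'. x \<in> V \<Longrightarrow> y \<in> V \<Longrightarrow> y' \<in> V \<Longrightarrow>
           1 \<le> j \<Longrightarrow> j \<le> i \<Longrightarrow> 1 \<le> j' \<Longrightarrow> j' \<le> i \<Longrightarrow>
           \<bar>sc x y i j - sc x y' i j'\<bar> \<le> \<delta>"
    and "set vs \<subseteq> V"
    and "v \<in> V"
  shows "(\<lambda>n. norm (layer_out psi sc (vs @ replicate n v) (n + length vs)
                    - layer_out psi sc [v] 1)) \<longlonglongrightarrow> 0"
proof -
  obtain L where L: "L-lipschitz_on UNIV psi" using assms(2) by blast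
  have L0: "0 \<le> L" using L by (rule lipschitz_on_nonneg)
  define C where "C = (\<Sum>j=1..length vs. if j \<le> length vs then norm (vs ! (j - 1) - v) else 0)"
  have star: "layer_out psi sc [v] 1 = psi (v + v) + (v + v)"
    by (simp add: layer_out_def attn_coef_def tok_def Let_def)
  have bnd: "norm (layer_out psi sc (vs @ replicate n v) (n + length vs) - layer_out psi sc [v] 1)
      \<le> (L + 1) * (exp \<delta> * C / real (n + length vs))" if n: "1 \<le> n" for n
  proof -
    define S where "S = vs @ replicate n v"
    define m where "m = n + length vs"
    define z where "z = (\<Sum>j=1..m. attn_coef sc S m j *\<^sub>R tok S j) + tok S m"
    have zb: "norm (z - (v + v)) \<le> exp \<delta> * C / real m"
      using key_bound[OF assms(3) assms(4) assms(5) n] unfolding z_def S_def m_def C_def by simp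
    have "layer_out psi sc S m = psi z + z" by (simp add: layer_out_def z_def Let_def)
    then have "layer_out psi sc S m - layer_out psi sc [v] 1 = (psi z - psi (v + v)) + (z - (v + v))"
      using star by simp
    then have "norm (layer_out psi sc S m - layer_out psi sc [v] 1)
        \<le> norm (psi z - psi (v + v)) + norm (z - (v + v))"
      by (metis norm_triangle_ineq)
    also have "norm (psi z - psi (v + v)) \<le> L * norm (z - (v + v))"
      using lipschitz_onD[OF L, of z "v + v"] by (simp add: dist_norm)
    finally have "norm (layer_out psi sc S m - layer_out psi sc [v] 1) \<le> (L + 1) * norm (z - (v + v))"
      by (simp add: algebra_simps)
    also have "\<dots> \<le> (L + 1) * (exp \<delta> * C / real m)"
      using zb L0 by (intro mult_left_mono) auto
    finally show ?thesis by (simp add: S_def m_def)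
  qed
  have lim: "(\<lambda>n. (L + 1) * (exp \<delta> * C / real (n + length vs))) \<longlonglongrightarrow> 0"
  proof -
    have "(\<lambda>n. 1 / real (n + length vs)) \<longlonglongrightarrow> 0"
      using LIMSEQ_ignore_initial_segment[OF lim_1_over_n, of "length vs"] by simp
    from tendsto_mult_left[OF this, of "(L + 1) * (exp \<delta> * C)"] show ?thesis by simp
  qed
  show ?thesis
    by (rule Lim_null_comparison[OF _ lim]) (use bnd in \<open>auto simp: eventually_sequentially\<close>)
qed

end
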